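(* Let $\mathcal V$ be a multivector field on $X$ and assume $X$ is invariant. Let $\mathcal M=\{M_i\mid i\in\mathbb P\}$ (bijectively indexed by a finite set $\mathbb P$) be the family of all strongly connected components $M$ of the digraph $G_{\mathcal V}$ such that some essential full solution has image contained in $M$. Define $i\le j$ on $\mathbb P$ iff there is a path in $X$ from a point of $M_j$ to a point of $M_i$. Then $\le$ is a partial order on $\mathbb P$ and $\mathcal M$ is a Morse decomposition of $X$ with respect to $(\mathbb P,\le)$. Moreover, $\mathcal M$ is minimal in the sense that for every $M\in\mathcal M$, no Morse decomposition of $M$ (for the multivector field $\mathcal V_M:=\{V\in\mathcal V: V\subset M\}$ induced on $M$) contains two distinct nonempty Morse sets.
   Context: $X$ is a finite $T_0$ topological space. For $A\subset X$, $\operatorname{cl}A$ is its closure and $\operatorname{mo}A:=\operatorname{cl}A\setminus A$. $A$ is locally closed if it is the intersection of an open and a closed subset of $X$. $H$ denotes relative singular homology. A multivector is a nonempty locally closed subset of $X$; a multivector field $\mathcal V$ on $X$ is a partition of $X$ into multivectors. For $x\in X$, $[x]$ denotes the element of $\mathcal V$ containing $x$. A multivector $V$ is critical if $H(\operatorname{cl}V,\operatorname{mo}V)\neq0$, regular otherwise. $A\subset X$ is $\mathcal V$-compatible if for every $x\in X$ either $[x]\cap A=\emptyset$ or $[x]\subset A$. Put $\Pi_{\mathcal V}(x):=[x]\cup\operatorname{cl}\{x\}$ and $\Pi_{\mathcal V}(A):=\bigcup_{x\in A}\Pi_{\mathcal V}(x)$. $G_{\mathcal V}$ is the digraph with vertex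 set $X$ and an edge $x\to y$ iff $y\in\Pi_{\mathcal V}(x)$; its strongly connected components are the equivalence classes of the relation "there is a directed path from $x$ to $y$ and from $y$ to $x$". A $\mathbb Z$-interval is $\mathbb Z\cap I$ for a real interval $I$. A solution in $A\subset X$ is a map $\varphi:D\to A$ on a $\mathbb Z$-interval $D$ with $\varphi(i+1)\in\Pi_{\mathcal V}(\varphi(i))$ whenever $i,i+1\in D$; it is full if $D=\mathbb Z$, and a path if $D$ is bounded, going from $\varphi(\min D)$ to $\varphi(\max D)$. A full solution $\varphi$ is essential if for every $t\in\mathbb Z$ with $[\varphi(t)]$ regular, the set $\{s\in\mathbb Z:\varphi(s)\notin[\varphi(t)]\}$ is unbounded below and unbounded above. $\operatorname{Inv}A$ is the set of $x\in A$ such that there is an essential full solution $\varphi$ with image in $A$ and $\varphi(0)=x$; $A$ is invariant if $\operatorname{Inv}A=A$. A closed set $N$ isolates an invariant set $S\subset N$ if (a) every path in $N$ with both endpoints in $S$ has image contained in $S$, and (b) $\Pi_{\mathcal V}(S)\subset N$. An invariant set is an isolated invariant set if some closed set isolates it. For a full solution $\varphi$: $\operatorname{uim}^-\varphi:=\bigcap_{t\le0}\varphi((-\infty,t])$, $\operatorname{uim}^+\varphi:=\bigcap_{t\ge0}\varphi([t,\infty))$; the $\mathcal V$-hull $\langle A\rangle_{\mathcal V}$ is the intersection of all $\mathcal V$-compatible locally closed sets containing $A$; $\alpha(\varphi):=\langle\operatorname{uim}^-\varphi\rangle_{\mathcal V}$, $\omega(\varphi):=\langle\operatorname{uim}^+\varphi\rangle_{\mathcal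 V}$. For invariant $X$ and a finite poset $(\mathbb P,\le)$, a family $\mathcal M=\{M_p\mid p\in\mathbb P\}$ is a Morse decomposition of $X$ if (i) the $M_p$ are mutually disjoint isolated invariant subsets of $X$, and (ii) for every essential full solution $\varphi$ in $X$ either $\operatorname{im}\varphi\subset M_r$ for some $r\in\mathbb P$, or there exist $p,q\in\mathbb P$ with $q>p$, $\alpha(\varphi)\subset M_q$ and $\omega(\varphi)\subset M_p$. The same definitions apply to an invariant locally closed subset $M$ in place of $X$ with the induced field $\mathcal V_M$. *)

theory Defs
  imports "HOL-Analysis.Analysis" "HOL-Homology.Homology"
begin

definition cl :: "'a topology \<Rightarrow> 'a set \<Rightarrow> 'a set" where
  "cl X A = X closure_of A"

definition mo :: "'a topology \<Rightarrow> 'a set \<Rightarrow> 'a set" where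
  "mo X A = cl X A - A"

definition locally_closed :: "'a topology \<Rightarrow> 'a set \<Rightarrow> bool" where
  "locally_closed X A \<longleftrightarrow> (\<exists>U C. openin X U \<and> closedin X C \<and> A = U \<inter> C)"

definition multivector :: "'a topology \<Rightarrow> 'a set \<Rightarrow> bool" where
  "multivector X A \<longleftrightarrow> A \<noteq> {} \<and> locally_closed X A"

definition multivector_field :: "'a topology \<Rightarrow> 'a set set \<Rightarrow> bool" where
  "multivector_field X V \<longleftrightarrow>
     (\<forall>W\<in>V. multivector X W) \<and> \<Union>V = topspace X \<and>
     (\<forall>W1\<in>V. \<forall>W2\<in>V. W1 \<noteq> W2 \<longrightarrow> W1 \<inter> W2 = {})"

definition cell :: "'a set set \<Rightarrow> 'a \<Rightarrow> 'a set" where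
  "cell V x = (THE W. W \<in> V \<and> x \<in> W)"

definition critical :: "'a topology \<Rightarrow> 'a set \<Rightarrow> bool" where
  "critical X W \<longleftrightarrow>
     (\<exists>p. \<not> trivial_group (relative_homology_group p (subtopology X (cl X W)) (mo X W)))"

definition compatible :: "'a topology \<Rightarrow> 'a set set \<Rightarrow> 'a set \<Rightarrow> bool" where
  "compatible X V A \<longleftrightarrow> (\<forall>x\<in>topspace X. cell V x \<inter> A = {} \<or> cell V x \<subseteq> A)"

definition Pi_V :: "'a topology \<Rightarrow> 'a set set \<Rightarrow> 'a \<Rightarrow> 'a set" where
  "Pi_V X V x = cell V x \<union> cl X {x}"

definition Pi_Vset :: "'a topology \<Rightarrow> 'a set set \<Rightarrow> 'a set \<Rightarrow> 'a set" where
  "Pi_Vset X V A = (\<Union>x\<in>A. Pi_V X V x)"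

definition GV :: "'a topology \<Rightarrow> 'a set set \<Rightarrow> ('a \<times> 'a) set" where
  "GV X V = {(x, y). x \<in> topspace X \<and> y \<in> Pi_V X V x}"

definition scc :: "'a topology \<Rightarrow> 'a set set \<Rightarrow> 'a set set" where
  "scc X V = (\<lambda>x. {y \<in> topspace X. (x, y) \<in> (GV X V)\<^sup>* \<and> (y, x) \<in> (GV X V)\<^sup>*}) ` topspace X"

definition vpath :: "'a topology \<Rightarrow> 'a set set \<Rightarrow> 'a set \<Rightarrow> (int \<Rightarrow> 'a) \<Rightarrow> int \<Rightarrow> int \<Rightarrow> bool" where
  "vpath X V A \<phi> a b \<longleftrightarrow> a \<le> b \<and> (\<forall>i\<in>{a..b}. \<phi> i \<in> A) \<and>
     (\<forall>i. a \<le> i \<and> i < b \<longrightarrow> \<phi> (i + 1) \<in> Pi_V X V (\<phi> i))"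

definition full_solution :: "'a topology \<Rightarrow> 'a set set \<Rightarrow> 'a set \<Rightarrow> (int \<Rightarrow> 'a) \<Rightarrow> bool" where
  "full_solution X V A \<phi> \<longleftrightarrow> (\<forall>i. \<phi> i \<in> A \<and> \<phi> (i + 1) \<in> Pi_V X V (\<phi> i))"

definition essential :: "'a topology \<Rightarrow> 'a set set \<Rightarrow> (int \<Rightarrow> 'a) \<Rightarrow> bool" where
  "essential X V \<phi> \<longleftrightarrow>
     (\<forall>t. \<not> critical X (cell V (\<phi> t)) \<longrightarrow>
        (\<forall>n. \<exists>s\<le>n. \<phi> s \<notin> cell V (\<phi> t)) \<and> (\<forall>n. \<exists>s\<ge>n. \<phi> s \<notin> cell V (\<phi> t)))"

definition ess_solution :: "'a topology \<Rightarrow> 'a set set \<Rightarrow> 'a set \<Rightarrow> (int \<Rightarrow> 'a) \<Rightarrow> bool" where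
  "ess_solution X V A \<phi> \<longleftrightarrow> full_solution X V A \<phi> \<and> essential X V \<phi>"

definition Inv :: "'a topology \<Rightarrow> 'a set set \<Rightarrow> 'a set \<Rightarrow> 'a set" where
  "Inv X V A = {x \<in> A. \<exists>\<phi>. ess_solution X V A \<phi> \<and> \<phi> 0 = x}"

definition invariant :: "'a topology \<Rightarrow> 'a set set \<Rightarrow> 'a set \<Rightarrow> bool" where
  "invariant X V A \<longleftrightarrow> Inv X V A = A"

definition isolates :: "'a topology \<Rightarrow> 'a set set \<Rightarrow> 'a set \<Rightarrow> 'a set \<Rightarrow> bool" where
  "isolates X V N S \<longleftrightarrow> closedin X N \<and> S \<subseteq> N \<and>
     (\<forall>\<phi> a b. vpath X V N \<phi> a b \<and> \<phi> a \<in> S \<and> \<phi> b \<in> S \<longrightarrow> \<phi> ` {a..b} \<subseteq> S) \<and>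
     Pi_Vset X V S \<subseteq> N"

definition isolated_invariant :: "'a topology \<Rightarrow> 'a set set \<Rightarrow> 'a set \<Rightarrow> bool" where
  "isolated_invariant X V S \<longleftrightarrow> invariant X V S \<and> (\<exists>N. isolates X V N S)"

definition uim_minus :: "(int \<Rightarrow> 'a) \<Rightarrow> 'a set" where
  "uim_minus \<phi> = (\<Inter>t\<in>{..0}. \<phi> ` {..t})"

definition uim_plus :: "(int \<Rightarrow> 'a) \<Rightarrow> 'a set" where
  "uim_plus \<phi> = (\<Inter>t\<in>{0..}. \<phi> ` {t..})"

definition vhull :: "'a topology \<Rightarrow> 'a set set \<Rightarrow> 'a set \<Rightarrow> 'a set" where
  "vhull X V A = \<Inter>{B. B \<subseteq> topspace X \<and> compatible X V B \<and> locally_closed X B \<and> A \<subseteq> B}"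

definition alpha_lim :: "'a topology \<Rightarrow> 'a set set \<Rightarrow> (int \<Rightarrow> 'a) \<Rightarrow> 'a set" where
  "alpha_lim X V \<phi> = vhull X V (uim_minus \<phi>)"

definition omega_lim :: "'a topology \<Rightarrow> 'a set set \<Rightarrow> (int \<Rightarrow> 'a) \<Rightarrow> 'a set" where
  "omega_lim X V \<phi> = vhull X V (uim_plus \<phi>)"

definition morse_decomposition ::
  "'a topology \<Rightarrow> 'a set set \<Rightarrow> 'p set \<Rightarrow> ('p \<Rightarrow> 'p \<Rightarrow> bool) \<Rightarrow> ('p \<Rightarrow> 'a set) \<Rightarrow> bool" where
  "morse_decomposition X V P leq M \<longleftrightarrow>
     finite P \<and> partial_order_on P {(p, q). p \<in> P \<and> q \<in> P \<and> leq p q} \<and>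
     (\<forall>p\<in>P. M p \<subseteq> topspace X \<and> isolated_invariant X V (M p)) \<and>
     (\<forall>p\<in>P. \<forall>q\<in>P. p \<noteq> q \<longrightarrow> M p \<inter> M q = {}) \<and>
     (\<forall>\<phi>. ess_solution X V (topspace X) \<phi> \<longrightarrow>
        (\<exists>r\<in>P. range \<phi> \<subseteq> M r) \<or>
        (\<exists>p\<in>P. \<exists>q\<in>P. leq p q \<and> q \<noteq> p \<and> alpha_lim X V \<phi> \<subseteq> M q \<and> omega_lim X V \<phi> \<subseteq> M p))"

definition induced_field :: "'a set set \<Rightarrow> 'a set \<Rightarrow> 'a set set" where
  "induced_field V M = {W \<in> V. W \<subseteq> M}"

end

theory Submission
  imports Defs
begin

lemma cell_props:
  assumes mvf: "multivector_field X V" and x: "x \<in> topspace X"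
  shows "cell V x \<in> V \<and> x \<in> cell V x"
proof -
  obtain W where W: "W \<in> V" "x \<in> W" using mvf x unfolding multivector_field_def by blast
  have "cell V x = W" unfolding cell_def
  proof (rule the_equality)
    show "W \<in> V \<and> x \<in> W" using W by blast
    fix W' assume "W' \<in> V \<and> x \<in> W'"
    then show "W' = W" using mvf W unfolding multivector_field_def by blast
  qed
  then show ?thesis using W by simp
qed

lemma cell_eq:
  assumes mvf: "multivector_field X V" and "W \<in> V" "x \<in> W"
  shows "cell V x = W"
  unfolding cell_def
proof (rule the_equality)
  show "W \<in> V \<and> x \<in> W" using assms by blast
  fix W' assume "W' \<in> V \<and> x \<in> W'"
  then show "W' = W" using mvf assms unfolding multivector_field_def by blast
qed

lemma cell_sub:
  assumes mvf: "multivector_field X V" and x: "x \<in> topspace X"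
  shows "cell V x \<subseteq> topspace X"
  using cell_props[OF assms] mvf unfolding multivector_field_def by blast

lemma Pi_sub:
  assumes mvf: "multivector_field X V" and x: "x \<in> topspace X"
  shows "Pi_V X V x \<subseteq> topspace X"
  using cell_sub[OF assms] by (simp add: Pi_V_def cl_def closure_of_subset_topspace)

lemma Pi_refl:
  assumes mvf: "multivector_field X V" and x: "x \<in> topspace X"
  shows "x \<in> Pi_V X V x"
  using cell_props[OF assms] unfolding Pi_V_def by blast

lemma GV_sub:
  assumes mvf: "multivector_field X V"
  shows "GV X V \<subseteq> topspace X \<times> topspace X"
  using Pi_sub[OF mvf] unfolding GV_def by blast

lemma rt_top:
  assumes mvf: "multivector_field X V" and "(x,y) \<in> (GV X V)\<^sup>*" and "x \<in> topspace X"
  shows "y \<in> topspace X"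
  using assms(2,3) by (induction rule: rtrancl_induct) (use GV_sub[OF mvf] in auto)

lemma scc_mem:
  assumes "S \<in> scc X V"
  shows "\<exists>x\<in>topspace X. S = {y \<in> topspace X. (x, y) \<in> (GV X V)\<^sup>* \<and> (y, x) \<in> (GV X V)\<^sup>*}"
  using assms unfolding scc_def by blast

lemma scc_sub: "S \<in> scc X V \<Longrightarrow> S \<subseteq> topspace X"
  using scc_mem by blast

lemma scc_ne: "S \<in> scc X V \<Longrightarrow> S \<noteq> {}"
  using scc_mem by fastforce

lemma scc_reach:
  assumes "S \<in> scc X V" "y \<in> S" "z \<in> S"
  shows "(y, z) \<in> (GV X V)\<^sup>*"
proof -
  obtain x where "x \<in> topspace X" and S: "S = {y \<in> topspace X. (x, y) \<in> (GV X V)\<^sup>* \<and> (y, x) \<in> (GV X V)\<^sup>*}"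
    using scc_mem[OF assms(1)] by blast
  then have "(y, x) \<in> (GV X V)\<^sup>*" "(x, z) \<in> (GV X V)\<^sup>*" using assms(2,3) by blast+
  then show ?thesis by (rule rtrancl_trans)
qed

lemma scc_closed:
  assumes "S \<in> scc X V" "y \<in> S" "z \<in> topspace X" "(y, z) \<in> (GV X V)\<^sup>*" "(z, y) \<in> (GV X V)\<^sup>*"
  shows "z \<in> S"
proof -
  obtain x where "x \<in> topspace X" and S: "S = {y \<in> topspace X. (x, y) \<in> (GV X V)\<^sup>* \<and> (y, x) \<in> (GV X V)\<^sup>*}"
    using scc_mem[OF assms(1)] by blast
  then have "(x, y) \<in> (GV X V)\<^sup>*" "(y, x) \<in> (GV X V)\<^sup>*" using assms(2) by blast+
  then have "(x, z) \<in> (GV X V)\<^sup>*" "(z, x) \<in> (GV X V)\<^sup>*"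
    using assms(4,5) rtrancl_trans by metis+
  then show ?thesis using S assms(3) by blast
qed

lemma scc_inner:
  assumes mvf: "multivector_field X V" and "S \<in> scc X V" "y \<in> S" "w \<in> S"
    "(y, z) \<in> (GV X V)\<^sup>*" "(z, w) \<in> (GV X V)\<^sup>*"
  shows "z \<in> S"
proof (rule scc_closed[OF assms(2,3)])
  show "z \<in> topspace X" using rt_top[OF mvf assms(5)] assms(2,3) scc_sub by blast
  show "(y, z) \<in> (GV X V)\<^sup>*" by fact
  show "(z, y) \<in> (GV X V)\<^sup>*" using assms(6) scc_reach[OF assms(2,4,3)] by (rule rtrancl_trans)
qed

lemma scc_disj:
  assumes "S \<in> scc X V" "S' \<in> scc X V" "z \<in> S" "z \<in> S'"
  shows "S = S'"
proof -
  have *: "A \<subseteq> B" if "A \<in> scc X V" "B \<in> scc X V" "z \<in> A" "z \<in> B" for A B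
  proof
    fix y assume "y \<in> A"
    have "y \<in> topspace X" using scc_sub[OF that(1)] \<open>y \<in> A\<close> by blast
    moreover have "(z, y) \<in> (GV X V)\<^sup>*" using scc_reach[OF that(1) that(3) \<open>y \<in> A\<close>] .
    moreover have "(y, z) \<in> (GV X V)\<^sup>*" using scc_reach[OF that(1) \<open>y \<in> A\<close> that(3)] .
    ultimately show "y \<in> B" using scc_closed[OF that(2,4)] by blast
  qed
  show ?thesis using *[of S S'] *[of S' S] assms by blast
qed

lemma scc_cell:
  assumes mvf: "multivector_field X V" and "S \<in> scc X V" "x \<in> S"
  shows "cell V x \<subseteq> S"
proof
  fix y assume y: "y \<in> cell V x"
  have x: "x \<in> topspace X" using assms scc_sub by blast
  have y': "y \<in> topspace X" using cell_sub[OF mvf x] y by blast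
  have "(x, y) \<in> GV X V" using x y unfolding GV_def Pi_V_def by blast
  moreover have "(y, x) \<in> GV X V"
    using y' cell_eq[OF mvf _ y] cell_props[OF mvf x] unfolding GV_def Pi_V_def by blast
  ultimately show "y \<in> S" using scc_closed[OF assms(2,3) y'] by blast
qed

lemma scc_compatible:
  assumes mvf: "multivector_field X V" and "S \<in> scc X V"
  shows "compatible X V S"
  unfolding compatible_def
proof (intro ballI)
  fix x assume x: "x \<in> topspace X"
  show "cell V x \<inter> S = {} \<or> cell V x \<subseteq> S"
  proof (cases "cell V x \<inter> S = {}")
    case False
    then obtain z where z: "z \<in> cell V x" "z \<in> S" by blast
    have "cell V z = cell V x" using cell_eq[OF mvf _ z(1)] cell_props[OF mvf x] by blast
    then show ?thesis using scc_cell[OF mvf assms(2) z(2)] by simp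
  qed simp
qed

lemma scc_restrict:
  assumes mvf: "multivector_field X V" and S: "S \<in> scc X V" and x: "x \<in> S" and y: "y \<in> S"
  shows "(x, y) \<in> (GV X V \<inter> S \<times> S)\<^sup>*"
proof -
  have "(z, y) \<in> (GV X V)\<^sup>* \<longrightarrow> (x, z) \<in> (GV X V \<inter> S \<times> S)\<^sup>*" if "(x, z) \<in> (GV X V)\<^sup>*" for z
    using that
  proof (induction rule: rtrancl_induct)
    case base then show ?case by simp
  next
    case (step z w)
    show ?case
    proof
      assume wy: "(w, y) \<in> (GV X V)\<^sup>*"
      have zy: "(z, y) \<in> (GV X V)\<^sup>*" using step(2) wy by (meson converse_rtrancl_into_rtrancl)
      have "z \<in> S" using scc_inner[OF mvf S x y step(1) zy] .
      moreover have "w \<in> S" using scc_inner[OF mvf S x y _ wy] step(1,2) by (meson rtrancl_into_rtrancl)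
      ultimately show "(x, w) \<in> (GV X V \<inter> S \<times> S)\<^sup>*"
        using step zy by (meson IntI mem_Sigma_iff rtrancl.rtrancl_into_rtrancl)
    qed
  qed
  then show ?thesis using scc_reach[OF S x y] by blast
qed

definition chn :: "('a \<times> 'a) set \<Rightarrow> (nat \<Rightarrow> 'a) \<Rightarrow> nat \<Rightarrow> bool" where
  "chn R p m \<longleftrightarrow> (\<forall>i<m. (p i, p (Suc i)) \<in> R)"

lemma path_of_rtrancl:
  assumes "(x, y) \<in> R\<^sup>*"
  shows "\<exists>p m. p 0 = x \<and> p m = y \<and> chn R p m"
  using assms
proof (induction rule: rtrancl_induct)
  case base
  show ?case by (rule exI[of _ "\<lambda>_. x"], rule exI[of _ 0]) (simp add: chn_def)
next
  case (step y z)
  then obtain p m where p: "p 0 = x" "p m = y" "chn R p m" by blast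
  let ?q = "p(Suc m := z)"
  have "?q 0 = x" using p by simp
  moreover have "?q (Suc m) = z" by simp
  moreover have "chn R ?q (Suc m)" unfolding chn_def
  proof (intro allI impI)
    fix i assume "i < Suc m"
    then consider "i < m" | "i = m" by linarith
    then show "(?q i, ?q (Suc i)) \<in> R"
    proof cases
      case 1 then show ?thesis using p(3) by (simp add: chn_def)
    next
      case 2 then show ?thesis using p(2) step(2) by simp
    qed
  qed
  ultimately show ?case by blast
qed

lemma chn_in:
  assumes "chn R p m" "R \<subseteq> S \<times> S" "p 0 \<in> S" "i \<le> m"
  shows "p i \<in> S"
proof (cases i)
  case 0 then show ?thesis using assms by simp
next
  case (Suc j)
  then have "(p j, p i) \<in> R" using assms(1,4) unfolding chn_def by auto
  then show ?thesis using assms(2) by blast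
qed

lemma chn_concat:
  assumes "chn R p m" "chn R q k" "p m = q 0"
  shows "chn R (\<lambda>i. if i \<le> m then p i else q (i - m)) (m + k)"
  unfolding chn_def
proof (intro allI impI)
  fix i assume i: "i < m + k"
  consider "Suc i \<le> m" | "i = m" | "m < i" by linarith
  then show "((if i \<le> m then p i else q (i - m)), (if Suc i \<le> m then p (Suc i) else q (Suc i - m))) \<in> R"
  proof cases
    case 1 then show ?thesis using assms(1) by (simp add: chn_def)
  next
    case 2
    then have "0 < k" using i by simp
    then have "(q 0, q (Suc 0)) \<in> R" using assms(2) by (simp add: chn_def)
    then show ?thesis using 2 assms(3) by (simp add: Suc_diff_le)
  next
    case 3
    then have a: "i - m < k" "Suc i - m = Suc (i - m)" using i by auto
    then have "(q (i - m), q (Suc (i - m))) \<in> R" using assms(2) by (simp add: chn_def)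
    then show ?thesis using 3 a by simp
  qed
qed

lemma walk_exists:
  assumes "finite F" "F \<subseteq> S" "x0 \<in> S" "\<forall>x\<in>S. \<forall>y\<in>S. (x, y) \<in> R\<^sup>*" "R \<subseteq> S \<times> S"
  shows "\<exists>w n. w 0 = x0 \<and> w n = x0 \<and> chn R w n \<and> F \<subseteq> w ` {0..n} \<and> w ` {0..n} \<subseteq> S"
  using assms(1,2)
proof (induction F rule: finite_induct)
  case empty
  show ?case
    by (rule exI[of _ "\<lambda>_. x0"], rule exI[of _ 0]) (simp add: chn_def assms(3))
next
  case (insert y F)
  have FS: "F \<subseteq> S" and yS: "y \<in> S" using insert.prems by auto
  obtain w n where w: "w 0 = x0" "w n = x0" "chn R w n" "F \<subseteq> w ` {0..n}"
    using insert.IH[OF FS] by blast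
  have r1: "(x0, y) \<in> R\<^sup>*" using assms(3,4) yS by blast
  have r2: "(y, x0) \<in> R\<^sup>*" using assms(3,4) yS by blast
  obtain p m where p: "p 0 = x0" "p m = y" "chn R p m"
    using path_of_rtrancl[OF r1] by blast
  obtain q k where q: "q 0 = y" "q k = x0" "chn R q k"
    using path_of_rtrancl[OF r2] by blast
  define w1 where "w1 = (\<lambda>i. if i \<le> n then w i else p (i - n))"
  have c1: "chn R w1 (n + m)" unfolding w1_def by (rule chn_concat) (use w p in auto)
  have w1a: "w1 (n + m) = y" using w p unfolding w1_def by (cases "m = 0") auto
  have w1b: "\<And>i. i \<le> n \<Longrightarrow> w1 i = w i" unfolding w1_def by simp
  define w2 where "w2 = (\<lambda>i. if i \<le> n + m then w1 i else q (i - (n + m)))"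
  have c2: "chn R w2 (n + m + k)" unfolding w2_def by (rule chn_concat) (use c1 w1a q in auto)
  have w2a: "w2 (n + m + k) = x0" using w1a q unfolding w2_def by (cases "k = 0") auto
  have w2b: "\<And>i. i \<le> n + m \<Longrightarrow> w2 i = w1 i" unfolding w2_def by simp
  have w20: "w2 0 = x0" using w2b[of 0] w1b[of 0] w by simp
  have "insert y F \<subseteq> w2 ` {0..n + m + k}"
  proof
    fix z assume "z \<in> insert y F"
    then consider "z = y" | "z \<in> F" by blast
    then show "z \<in> w2 ` {0..n + m + k}"
    proof cases
      case 1 then show ?thesis using w2b[of "n+m"] w1a by (intro image_eqI[of _ _ "n+m"]) auto
    next
      case 2
      then obtain i where "i \<le> n" "z = w i" using w(4) by auto
      then show ?thesis using w2b[of i] w1b[of i] by (intro image_eqI[of _ _ i]) auto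
    qed
  qed
  moreover have "w2 ` {0..n + m + k} \<subseteq> S"
    using chn_in[OF c2 assms(5)] w20 assms(3) by auto
  ultimately show ?case using c2 w2a w20 by blast
qed

lemma loop_exists:
  assumes "finite S" "x0 \<in> S" "\<forall>x\<in>S. \<forall>y\<in>S. (x, y) \<in> R\<^sup>*" "R \<subseteq> S \<times> S" "\<forall>x\<in>S. (x, x) \<in> R"
  shows "\<exists>(\<psi> :: int \<Rightarrow> 'a) L. (L::int) > 0 \<and> \<psi> 0 = x0 \<and> range \<psi> = S \<and> (\<forall>t. (\<psi> t, \<psi> (t + 1)) \<in> R)
           \<and> (\<forall>t k. \<psi> (t + k * L) = \<psi> t)"
proof -
  obtain w n where w: "w 0 = x0" "w n = x0" "chn R w n" "S \<subseteq> w ` {0..n}" "w ` {0..n} \<subseteq> S"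
    using walk_exists[OF assms(1) order.refl assms(2,3,4)] by blast
  define L where "L = int n + 1"
  define \<psi> where "\<psi> = (\<lambda>t. w (nat (t mod L)))"
  have L: "L > 0" unfolding L_def by simp
  have "\<psi> 0 = x0" unfolding \<psi>_def using w by simp
  moreover have "\<forall>t k. \<psi> (t + k * L) = \<psi> t" unfolding \<psi>_def by simp
  moreover have "range \<psi> = S"
  proof
    show "range \<psi> \<subseteq> S"
    proof
      fix z assume "z \<in> range \<psi>"
      then obtain t where t: "z = w (nat (t mod L))" unfolding \<psi>_def by blast
      have "t mod L < L" using L by (rule pos_mod_bound)
      then have "t mod L \<le> int n" unfolding L_def by linarith
      then have "nat (t mod L) \<le> n" by (simp add: nat_le_iff)
      then show "z \<in> S" using w(5) t by auto
    qed
    show "S \<subseteq> range \<psi>"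
    proof
      fix z assume "z \<in> S"
      then obtain i where i: "i \<le> n" "z = w i" using w(4) by auto
      have "int i mod L = int i" unfolding L_def using i by simp
      then have "\<psi> (int i) = z" unfolding \<psi>_def using i by simp
      then show "z \<in> range \<psi>" by (metis rangeI)
    qed
  qed
  moreover have "\<forall>t. (\<psi> t, \<psi> (t + 1)) \<in> R"
  proof
    fix t
    have e: "(t + 1) mod L = (t mod L + 1) mod L" by (simp add: mod_add_left_eq)
    have b: "0 \<le> t mod L" "t mod L < L" using L by simp_all
    show "(\<psi> t, \<psi> (t + 1)) \<in> R"
    proof (cases "t mod L + 1 < L")
      case True
      then have "(t + 1) mod L = t mod L + 1" using e b by simp
      then have "nat ((t + 1) mod L) = Suc (nat (t mod L))" using b by simp
      moreover have "nat (t mod L) < n" using True b unfolding L_def by linarith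
      ultimately show ?thesis unfolding \<psi>_def using w(3) by (simp add: chn_def)
    next
      case False
      then have tl: "t mod L = int n" using b unfolding L_def by linarith
      have "(t + 1) mod L = 0" using e tl unfolding L_def by simp
      then have "\<psi> (t + 1) = x0" "\<psi> t = x0" unfolding \<psi>_def using w tl by simp_all
      then show ?thesis using assms(2,5) by simp
    qed
  qed
  ultimately show ?thesis using L by blast
qed

lemma periodic_leave:
  assumes "(L::int) > 0" "\<forall>t k. \<psi> (t + k * L) = \<psi> t" "\<psi> t0 \<notin> W"
  shows "(\<forall>n. \<exists>s\<le>n. \<psi> s \<notin> W) \<and> (\<forall>n. \<exists>s\<ge>n. \<psi> s \<notin> W)"
proof (intro conjI allI)
  fix n :: int
  define K where "K = \<bar>n - t0\<bar>"
  have K0: "0 \<le> K" "t0 - n \<le> K" "n - t0 \<le> K"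
    unfolding K_def by (rule abs_ge_zero, arith, arith)
  have KL: "K \<le> K * L" using mult_left_mono[of 1 L K] assms(1) K0(1) by simp
  have p1: "\<psi> (t0 + (- K) * L) = \<psi> t0" using assms(2) by blast
  have p2: "\<psi> (t0 + K * L) = \<psi> t0" using assms(2) by blast
  have e: "t0 + (- K) * L = t0 - K * L" by simp
  have "t0 - K * L \<le> n" using KL K0 by linarith
  then have "t0 + (- K) * L \<le> n \<and> \<psi> (t0 + (- K) * L) \<notin> W" using p1 assms(3) e by simp
  then show "\<exists>s\<le>n. \<psi> s \<notin> W" by (intro exI[of _ "t0 + (- K) * L"])
  have "t0 + K * L \<ge> n" using KL K0 by linarith
  then have "t0 + K * L \<ge> n \<and> \<psi> (t0 + K * L) \<notin> W" using p2 assms(3) by simp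
  then show "\<exists>s\<ge>n. \<psi> s \<notin> W" by (intro exI[of _ "t0 + K * L"])
qed

lemma sol_reach:
  assumes "full_solution X V (topspace X) \<phi>" "a \<le> b"
  shows "(\<phi> a, \<phi> b) \<in> (GV X V)\<^sup>*"
  using assms(2)
proof (induction b rule: int_ge_induct)
  case base then show ?case by simp
next
  case (step i)
  have "(\<phi> i, \<phi> (i + 1)) \<in> GV X V" using assms(1) unfolding full_solution_def GV_def by simp
  then show ?case using step(2) by (rule rtrancl_into_rtrancl[rotated])
qed

lemma vpath_reach:
  assumes "vpath X V (topspace X) \<phi> a b" "a \<le> i" "i \<le> j" "j \<le> b"
  shows "(\<phi> i, \<phi> j) \<in> (GV X V)\<^sup>*"
proof -
  have "j \<le> b \<longrightarrow> (\<phi> i, \<phi> j) \<in> (GV X V)\<^sup>*"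
    using assms(3)
  proof (induction j rule: int_ge_induct)
    case base then show ?case by simp
  next
    case (step k)
    show ?case
    proof
      assume kb: "k + 1 \<le> b"
      then have "(\<phi> i, \<phi> k) \<in> (GV X V)\<^sup>*" using step by simp
      moreover have "(\<phi> k, \<phi> (k + 1)) \<in> GV X V"
        using assms(1,2) step(1) kb unfolding vpath_def GV_def by auto
      ultimately show "(\<phi> i, \<phi> (k + 1)) \<in> (GV X V)\<^sup>*" by (rule rtrancl_into_rtrancl)
    qed
  qed
  then show ?thesis using assms(4) by blast
qed

lemma vpath_of_reach:
  assumes mvf: "multivector_field X V" and x: "x \<in> topspace X" and xy: "(x, y) \<in> (GV X V)\<^sup>*"
  shows "\<exists>\<phi> a b. vpath X V (topspace X) \<phi> a b \<and> \<phi> a = x \<and> \<phi> b = y"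
proof -
  obtain p m where p: "p 0 = x" "p m = y" "chn (GV X V) p m" using path_of_rtrancl[OF xy] by blast
  have "vpath X V (topspace X) (\<lambda>i. p (nat i)) 0 (int m)"
    unfolding vpath_def
  proof (intro conjI ballI allI impI)
    show "0 \<le> int m" by simp
    fix i assume "i \<in> {0..int m}"
    then have "i \<le> int m" by simp
    then have ni: "nat i \<le> m" by (rule nat_le_iff[THEN iffD2])
    show "p (nat i) \<in> topspace X"
      using chn_in[OF p(3) GV_sub[OF mvf] _ ni] p(1) x by blast
  next
    fix i :: int assume i: "0 \<le> i \<and> i < int m"
    then obtain j where j: "i = int j" by (metis nonneg_int_cases)
    then have "j < m" using i by simp
    then have "(p (nat i), p (Suc (nat i))) \<in> GV X V" using p(3) j unfolding chn_def by simp
    moreover have "nat (i + 1) = Suc (nat i)"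
    proof -
      have "i + 1 = int (Suc j)" using j by simp
      then show ?thesis using j by (metis nat_int)
    qed
    ultimately show "p (nat (i + 1)) \<in> Pi_V X V (p (nat i))" unfolding GV_def by simp
  qed
  then show ?thesis using p by (intro exI[of _ "\<lambda>i. p (nat i)"] exI[of _ 0] exI[of _ "int m"]) simp
qed

lemma uim_minus_iff: "x \<in> uim_minus \<phi> \<longleftrightarrow> (\<forall>n. \<exists>s\<le>n. \<phi> s = x)"
proof
  assume "x \<in> uim_minus \<phi>"
  then have *: "\<forall>t\<le>0. \<exists>s\<le>t. \<phi> s = x" unfolding uim_minus_def by auto
  show "\<forall>n. \<exists>s\<le>n. \<phi> s = x"
  proof
    fix n :: int
    obtain s where "s \<le> min n 0" "\<phi> s = x" using *[rule_format, of "min n 0"] by auto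
    then show "\<exists>s\<le>n. \<phi> s = x" by auto
  qed
qed (auto simp: uim_minus_def)

lemma uim_plus_iff: "x \<in> uim_plus \<phi> \<longleftrightarrow> (\<forall>n. \<exists>s\<ge>n. \<phi> s = x)"
proof
  assume "x \<in> uim_plus \<phi>"
  then have *: "\<forall>t\<ge>0. \<exists>s\<ge>t. \<phi> s = x" unfolding uim_plus_def by auto
  show "\<forall>n. \<exists>s\<ge>n. \<phi> s = x"
  proof
    fix n :: int
    obtain s where "s \<ge> max n 0" "\<phi> s = x" using *[rule_format, of "max n 0"] by auto
    then show "\<exists>s\<ge>n. \<phi> s = x" by auto
  qed
qed (auto simp: uim_plus_def)

lemma pigeon_minus:
  assumes "finite A" "\<forall>n. \<exists>s\<le>(n::int). \<phi> s \<in> A"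
  shows "\<exists>x\<in>A. \<forall>n. \<exists>s\<le>n. \<phi> s = x"
proof (rule ccontr)
  assume "\<not> ?thesis"
  then have "\<forall>x\<in>A. \<exists>n. \<forall>s\<le>n. \<phi> s \<noteq> x" by blast
  then have "\<exists>N. \<forall>x\<in>A. \<forall>s\<le>N x. \<phi> s \<noteq> x" by (rule bchoice)
  then obtain N where N: "\<forall>x\<in>A. \<forall>s\<le>N x. \<phi> s \<noteq> x" by blast
  have ne: "A \<noteq> {}" using assms(2) by blast
  define n0 where "n0 = Min (N ` A)"
  obtain s where s: "s \<le> n0" "\<phi> s \<in> A" using assms(2) by blast
  have "n0 \<le> N (\<phi> s)" unfolding n0_def using assms(1) s(2) by simp
  then have "s \<le> N (\<phi> s)" using s(1) by linarith
  then show False using N s(2) by blast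
qed

lemma pigeon_plus:
  assumes "finite A" "\<forall>n. \<exists>s\<ge>(n::int). \<phi> s \<in> A"
  shows "\<exists>x\<in>A. \<forall>n. \<exists>s\<ge>n. \<phi> s = x"
proof (rule ccontr)
  assume "\<not> ?thesis"
  then have "\<forall>x\<in>A. \<exists>n. \<forall>s\<ge>n. \<phi> s \<noteq> x" by blast
  then have "\<exists>N. \<forall>x\<in>A. \<forall>s\<ge>N x. \<phi> s \<noteq> x" by (rule bchoice)
  then obtain N where N: "\<forall>x\<in>A. \<forall>s\<ge>N x. \<phi> s \<noteq> x" by blast
  define n0 where "n0 = Max (N ` A)"
  obtain s where s: "s \<ge> n0" "\<phi> s \<in> A" using assms(2) by blast
  have "n0 \<ge> N (\<phi> s)" unfolding n0_def using assms(1) s(2) by simp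
  then have "s \<ge> N (\<phi> s)" using s(1) by linarith
  then show False using N s(2) by blast
qed

lemma vhull_sup: "A \<subseteq> vhull X V A"
  unfolding vhull_def by blast

lemma vhull_sub:
  "B \<subseteq> topspace X \<Longrightarrow> compatible X V B \<Longrightarrow> locally_closed X B \<Longrightarrow> A \<subseteq> B \<Longrightarrow> vhull X V A \<subseteq> B"
  unfolding vhull_def by blast

lemma H0_nontrivial:
  assumes "a \<in> topspace X"
  shows "\<not> trivial_group (homology_group 0 X)"
proof
  assume tr: "trivial_group (homology_group 0 X)"
  have inj: "inj_on (hom_induced 0 (subtopology X {a}) {} X {} id) (carrier (homology_group 0 (subtopology X {a})))"
    by (rule inj_on_hom_induced_inclusion) (simp add: assms)
  have "homology_group 0 (subtopology X {a}) \<cong> integer_group"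
    by (rule homology_coefficients) (use assms in auto)
  then have nt: "\<not> trivial_group (homology_group 0 (subtopology X {a}))"
    using isomorphic_group_triviality nontrivial_integer_group group_integer_group
    by (metis group_relative_homology_group)
  have "carrier (homology_group 0 (subtopology X {a})) \<subseteq> {one (homology_group 0 (subtopology X {a}))}"
  proof
    fix c assume c: "c \<in> carrier (homology_group 0 (subtopology X {a}))"
    let ?h = "hom_induced 0 (subtopology X {a}) {} X {} id"
    have o: "one (homology_group 0 (subtopology X {a})) \<in> carrier (homology_group 0 (subtopology X {a}))"
      by (simp add: group.is_monoid monoid.one_closed)
    have "?h c = ?h (one (homology_group 0 (subtopology X {a})))"
      using hom_induced_carrier[of 0 "subtopology X {a}" "{}" X "{}" id] tr unfolding trivial_group_def by blast
    then show "c \<in> {one (homology_group 0 (subtopology X {a}))}"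
      using inj c o unfolding inj_on_def by blast
  qed
  then show False using nt group.trivial_group_subset group_relative_homology_group by blast
qed

lemma crit_self:
  assumes "M \<subseteq> topspace X" "M \<noteq> {}"
  shows "critical (subtopology X M) M"
proof -
  have tM: "topspace (subtopology X M) = M" using assms(1) by auto
  have c: "cl (subtopology X M) M = M"
    unfolding cl_def using closure_of_topspace[of "subtopology X M"] tM by simp
  have m: "mo (subtopology X M) M = {}" unfolding mo_def c by simp
  obtain a where a: "a \<in> M" using assms(2) by blast
  have "\<not> trivial_group (homology_group 0 (subtopology X M))"
    by (rule H0_nontrivial[of a]) (use a tM in simp)
  then show ?thesis unfolding critical_def c m subtopology_subtopology by auto
qed

lemma scc_lc:
  assumes mvf: "multivector_field X V" and fin: "finite (topspace X)" and S: "S \<in> scc X V"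
  shows "locally_closed X S"
proof -
  have Stop: "S \<subseteq> topspace X" using scc_sub[OF S] .
  have clpts: "X closure_of A = (\<Union>a\<in>A. X closure_of {a})" if "A \<subseteq> topspace X" for A
  proof -
    have "finite A" using fin that by (rule rev_finite_subset)
    then have "X closure_of (\<Union>a\<in>A. {a}) = (\<Union>a\<in>A. X closure_of {a})"
      using closure_of_Union[of "(\<lambda>a. {a}) ` A" X] by simp
    then show ?thesis by simp
  qed
  have edge: "(x, y) \<in> GV X V" if "x \<in> topspace X" "y \<in> X closure_of {x}" for x y
    using that unfolding GV_def Pi_V_def cl_def by blast
  define C where "C = X closure_of S"
  have Ctop: "C \<subseteq> topspace X" unfolding C_def by (rule closure_of_subset_topspace)
  have SC: "S \<subseteq> C" unfolding C_def using Stop by (rule closure_of_subset)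
  have "X closure_of (C - S) \<subseteq> C - S"
  proof
    fix y assume y: "y \<in> X closure_of (C - S)"
    then obtain z where z: "z \<in> C - S" "y \<in> X closure_of {z}" using clpts[of "C - S"] Ctop by blast
    obtain x where x: "x \<in> S" "z \<in> X closure_of {x}" using z(1) clpts[OF Stop] unfolding C_def by blast
    have xt: "x \<in> topspace X" and zt: "z \<in> topspace X" using x Stop z Ctop by auto
    have "X closure_of {z} \<subseteq> X closure_of {x}"
      using closure_of_mono[of "{z}" "X closure_of {x}" X] x(2) by simp
    then have yx: "y \<in> X closure_of {x}" using z(2) by blast
    have "X closure_of {x} \<subseteq> C" unfolding C_def using x(1) closure_of_mono[of "{x}" S X] by blast
    then have yC: "y \<in> C" using yx by blast
    have "y \<notin> S"
    proof
      assume yS: "y \<in> S"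
      have "(x, z) \<in> (GV X V)\<^sup>*" using edge[OF xt x(2)] by blast
      moreover have "(z, x) \<in> (GV X V)\<^sup>*"
        using edge[OF zt z(2)] scc_reach[OF S yS x(1)] by (rule converse_rtrancl_into_rtrancl)
      ultimately have "z \<in> S" using scc_closed[OF S x(1) zt] by blast
      then show False using z(1) by blast
    qed
    then show "y \<in> C - S" using yC by blast
  qed
  then have cl: "closedin X (C - S)" using Ctop closure_of_subset_eq by blast
  have "openin X (topspace X - (C - S))" using cl by blast
  moreover have "closedin X C" unfolding C_def by simp
  moreover have "S = (topspace X - (C - S)) \<inter> C" using SC Ctop by blast
  ultimately show ?thesis unfolding locally_closed_def by blast
qed

lemma full_solution_mono:
  "A \<subseteq> B \<Longrightarrow> full_solution X V A \<phi> \<Longrightarrow> full_solution X V B \<phi>"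
  unfolding full_solution_def by blast

lemma scc_ess_loop:
  assumes mvf: "multivector_field X V" and fin: "finite (topspace X)" and S: "S \<in> scc X V"
    and x0: "x0 \<in> S" and crit: "\<And>W. W \<in> V \<Longrightarrow> S \<subseteq> W \<Longrightarrow> critical X W"
  shows "\<exists>\<psi>. ess_solution X V S \<psi> \<and> \<psi> 0 = x0 \<and> range \<psi> = S"
proof -
  define R where "R = GV X V \<inter> S \<times> S"
  have Stop: "S \<subseteq> topspace X" using scc_sub[OF S] .
  have finS: "finite S" using fin Stop by (rule rev_finite_subset)
  have conn: "\<forall>x\<in>S. \<forall>y\<in>S. (x, y) \<in> R\<^sup>*" unfolding R_def using scc_restrict[OF mvf S] by blast
  have RS: "R \<subseteq> S \<times> S" unfolding R_def by blast
  have refl: "\<forall>x\<in>S. (x, x) \<in> R"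
    unfolding R_def GV_def using Pi_refl[OF mvf] Stop by blast
  obtain \<psi> and L :: int where L: "L > 0" and p0: "\<psi> 0 = x0" and rng: "range \<psi> = S"
    and step: "\<forall>t. (\<psi> t, \<psi> (t + 1)) \<in> R" and per: "\<forall>t k. \<psi> (t + k * L) = \<psi> t"
    using loop_exists[OF finS x0 conn RS refl] by blast
  have fs: "full_solution X V S \<psi>"
    unfolding full_solution_def
  proof
    fix i
    show "\<psi> i \<in> S \<and> \<psi> (i + 1) \<in> Pi_V X V (\<psi> i)"
      using rng step[rule_format, of i] unfolding R_def GV_def by auto
  qed
  have es: "essential X V \<psi>"
    unfolding essential_def
  proof (intro allI impI)
    fix t assume nc: "\<not> critical X (cell V (\<psi> t))"
    have pt: "\<psi> t \<in> topspace X" using rng Stop by auto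
    have WV: "cell V (\<psi> t) \<in> V" using cell_props[OF mvf pt] by blast
    have "\<not> S \<subseteq> cell V (\<psi> t)" using crit[OF WV] nc by blast
    then obtain y where y: "y \<in> S" "y \<notin> cell V (\<psi> t)" by blast
    then obtain t0 where "\<psi> t0 = y" using rng by (metis rangeE)
    then show "(\<forall>n. \<exists>s\<le>n. \<psi> s \<notin> cell V (\<psi> t)) \<and> (\<forall>n. \<exists>s\<ge>n. \<psi> s \<notin> cell V (\<psi> t))"
      using periodic_leave[OF L per, of t0 "cell V (\<psi> t)"] y by blast
  qed
  show ?thesis using fs es p0 rng unfolding ess_solution_def by blast
qed

lemma uim_minus_reach:
  assumes "full_solution X V (topspace X) \<phi>" "x \<in> uim_minus \<phi>" "y \<in> uim_minus \<phi>"
  shows "(x, y) \<in> (GV X V)\<^sup>*"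
proof -
  obtain s where s: "s \<le> 0" "\<phi> s = y" using assms(3) unfolding uim_minus_iff by blast
  obtain s' where s': "s' \<le> s" "\<phi> s' = x" using assms(2) unfolding uim_minus_iff by blast
  show ?thesis using sol_reach[OF assms(1) s'(1)] s s' by simp
qed

lemma uim_plus_reach:
  assumes "full_solution X V (topspace X) \<phi>" "x \<in> uim_plus \<phi>" "y \<in> uim_plus \<phi>"
  shows "(x, y) \<in> (GV X V)\<^sup>*"
proof -
  obtain s where s: "s \<ge> 0" "\<phi> s = x" using assms(2) unfolding uim_plus_iff by blast
  obtain s' where s': "s' \<ge> s" "\<phi> s' = y" using assms(3) unfolding uim_plus_iff by blast
  show ?thesis using sol_reach[OF assms(1) s'(1)] s s' by simp
qed

lemma morse_D1:
  assumes "morse_decomposition X V P leq M"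
  shows "\<forall>p\<in>P. M p \<subseteq> topspace X \<and> isolated_invariant X V (M p)"
  using assms unfolding morse_decomposition_def by (elim conjE) assumption

lemma morse_D2:
  assumes "morse_decomposition X V P leq M"
  shows "\<forall>p\<in>P. \<forall>q\<in>P. p \<noteq> q \<longrightarrow> M p \<inter> M q = {}"
  using assms unfolding morse_decomposition_def by (elim conjE) assumption

lemma morse_D3:
  assumes "morse_decomposition X V P leq M"
  shows "\<forall>\<phi>. ess_solution X V (topspace X) \<phi> \<longrightarrow>
        (\<exists>r\<in>P. range \<phi> \<subseteq> M r) \<or>
        (\<exists>p\<in>P. \<exists>q\<in>P. leq p q \<and> q \<noteq> p \<and> alpha_lim X V \<phi> \<subseteq> M q \<and> omega_lim X V \<phi> \<subseteq> M p)"
  using assms unfolding morse_decomposition_def by (elim conjE) assumption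

theorem theorem7p3:
  fixes X :: "'a topology" and V :: "'a set set"
    and P :: "'i set" and Ms :: "'i \<Rightarrow> 'a set"
    and leq :: "'i \<Rightarrow> 'i \<Rightarrow> bool"
  assumes "finite (topspace X)" and "t0_space X"
    and "multivector_field X V"
    and "invariant X V (topspace X)"
    and "finite P"
    and "bij_betw Ms P {M \<in> scc X V. \<exists>\<phi>. ess_solution X V (topspace X) \<phi> \<and> range \<phi> \<subseteq> M}"
    and "\<And>i j. leq i j \<longleftrightarrow> i \<in> P \<and> j \<in> P \<and>
           (\<exists>\<phi> a b. vpath X V (topspace X) \<phi> a b \<and> \<phi> a \<in> Ms j \<and> \<phi> b \<in> Ms i)"
  shows "partial_order_on P {(i, j). leq i j}
    \<and> morse_decomposition X V P leq Ms
    \<and> (\<forall>i\<in>P. \<forall>(Q :: 'q set) leQ (N :: 'q \<Rightarrow> 'a set).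
          morse_decomposition (subtopology X (Ms i)) (induced_field V (Ms i)) Q leQ N \<longrightarrow>
          \<not> (\<exists>p\<in>Q. \<exists>q\<in>Q. p \<noteq> q \<and> N p \<noteq> {} \<and> N q \<noteq> {}))"
proof -
  note fin = assms(1) and mvf = assms(3) and bij = assms(6) and leqdef = assms(7)
  define E where "E = GV X V"
  define Fam where "Fam = {M \<in> scc X V. \<exists>\<phi>. ess_solution X V (topspace X) \<phi> \<and> range \<phi> \<subseteq> M}"
  have img: "Ms ` P = Fam" using bij unfolding bij_betw_def Fam_def by blast
  have inj: "inj_on Ms P" using bij unfolding bij_betw_def by blast
  have MsS: "Ms i \<in> scc X V" if "i \<in> P" for i using img that unfolding Fam_def by blast
  have MsE: "\<exists>\<phi>. ess_solution X V (topspace X) \<phi> \<and> range \<phi> \<subseteq> Ms i" if "i \<in> P" for i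
    using img that unfolding Fam_def by blast
  have Mstop: "Ms i \<subseteq> topspace X" if "i \<in> P" for i using scc_sub[OF MsS[OF that]] .
  have Msne: "Ms i \<noteq> {}" if "i \<in> P" for i using scc_ne[OF MsS[OF that]] .
  have leq_iff: "leq i j \<longleftrightarrow> i \<in> P \<and> j \<in> P \<and> (\<exists>x\<in>Ms j. \<exists>y\<in>Ms i. (x, y) \<in> E\<^sup>*)" for i j
  proof
    assume "leq i j"
    then obtain \<phi> a b where ij: "i \<in> P" "j \<in> P" and vp: "vpath X V (topspace X) \<phi> a b"
      and pa: "\<phi> a \<in> Ms j" and pb: "\<phi> b \<in> Ms i" using leqdef by blast
    have "a \<le> b" using vp unfolding vpath_def by blast
    then have "(\<phi> a, \<phi> b) \<in> E\<^sup>*" unfolding E_def using vpath_reach[OF vp] by simp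
    then show "i \<in> P \<and> j \<in> P \<and> (\<exists>x\<in>Ms j. \<exists>y\<in>Ms i. (x, y) \<in> E\<^sup>*)" using ij pa pb by blast
  next
    assume "i \<in> P \<and> j \<in> P \<and> (\<exists>x\<in>Ms j. \<exists>y\<in>Ms i. (x, y) \<in> E\<^sup>*)"
    then obtain x y where ij: "i \<in> P" "j \<in> P" and xy: "x \<in> Ms j" "y \<in> Ms i" "(x, y) \<in> E\<^sup>*" by blast
    have "x \<in> topspace X" using Mstop[OF ij(2)] xy(1) by blast
    then obtain \<phi> a b where "vpath X V (topspace X) \<phi> a b" "\<phi> a = x" "\<phi> b = y"
      using vpath_of_reach[OF mvf _ xy(3)[unfolded E_def]] by blast
    then show "leq i j" using leqdef ij xy by blast
  qed
  define r where "r = {(i, j). leq i j}"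
  have po: "partial_order_on P r"
    unfolding partial_order_on_def preorder_on_def
  proof (intro conjI)
    show "r \<subseteq> P \<times> P" unfolding r_def using leq_iff by blast
    show "refl_on P r" unfolding refl_on_def r_def
    proof
      fix i assume i: "i \<in> P"
      then obtain x where "x \<in> Ms i" using Msne by blast
      then show "(i, i) \<in> {(i, j). leq i j}" using leq_iff i by blast
    qed
    show "trans r" unfolding trans_def r_def
    proof (intro allI impI)
      fix i j k assume a1: "(i, j) \<in> {(i, j). leq i j}" and a2: "(j, k) \<in> {(i, j). leq i j}"
      from a1 obtain x y where x: "i \<in> P" "j \<in> P" "x \<in> Ms j" "y \<in> Ms i" "(x, y) \<in> E\<^sup>*"
        using leq_iff by blast
      from a2 obtain x' y' where x': "k \<in> P" "x' \<in> Ms k" "y' \<in> Ms j" "(x', y') \<in> E\<^sup>*"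
        using leq_iff by blast
      have "(y', x) \<in> E\<^sup>*" unfolding E_def using scc_reach[OF MsS[OF x(2)] x'(3) x(3)] .
      then have "(x', y) \<in> E\<^sup>*" using x(5) x'(4) by (meson rtrancl_trans)
      then show "(i, k) \<in> {(i, j). leq i j}" using leq_iff x x' by blast
    qed
    show "antisym r" unfolding antisym_def r_def
    proof (intro allI impI)
      fix i j assume a1: "(i, j) \<in> {(i, j). leq i j}" and a2: "(j, i) \<in> {(i, j). leq i j}"
      from a1 obtain x y where x: "i \<in> P" "j \<in> P" "x \<in> Ms j" "y \<in> Ms i" "(x, y) \<in> E\<^sup>*"
        using leq_iff by blast
      from a2 obtain x' y' where x': "x' \<in> Ms i" "y' \<in> Ms j" "(x', y') \<in> E\<^sup>*"
        using leq_iff by blast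
      have "(y, x') \<in> E\<^sup>*" unfolding E_def using scc_reach[OF MsS[OF x(1)] x(4) x'(1)] .
      moreover have "(y', x) \<in> E\<^sup>*" unfolding E_def using scc_reach[OF MsS[OF x(2)] x'(2) x(3)] .
      ultimately have yx: "(y, x) \<in> E\<^sup>*" using x'(3) by (meson rtrancl_trans)
      have "y \<in> topspace X" using Mstop[OF x(1)] x(4) by blast
      then have "y \<in> Ms j" using scc_closed[OF MsS[OF x(2)] x(3)] x(5) yx unfolding E_def by blast
      then have "Ms i = Ms j" using scc_disj[OF MsS[OF x(1)] MsS[OF x(2)]] x(4) by blast
      then show "i = j" using inj x(1,2) unfolding inj_on_def by blast
    qed
  qed
  have rr: "{(p, q). p \<in> P \<and> q \<in> P \<and> leq p q} = r" unfolding r_def using leq_iff by blast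
  have isol: "isolated_invariant X V (Ms p)" if p: "p \<in> P" for p
  proof -
    let ?S = "Ms p"
    have crit: "critical X W" if W: "W \<in> V" "?S \<subseteq> W" for W
    proof (rule ccontr)
      assume nc: "\<not> critical X W"
      obtain \<phi> where \<phi>: "ess_solution X V (topspace X) \<phi>" "range \<phi> \<subseteq> ?S" using MsE[OF p] by blast
      have c0: "cell V (\<phi> 0) = W" using cell_eq[OF mvf W(1)] \<phi>(2) W(2) by blast
      then obtain s where "\<phi> s \<notin> W" using \<phi>(1) nc unfolding ess_solution_def essential_def by blast
      then show False using \<phi>(2) W(2) by blast
    qed
    have "Inv X V ?S = ?S"
    proof
      show "Inv X V ?S \<subseteq> ?S" unfolding Inv_def by blast
      show "?S \<subseteq> Inv X V ?S"
      proof
        fix x assume x: "x \<in> ?S"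
        obtain \<psi> where "ess_solution X V ?S \<psi>" "\<psi> 0 = x"
          using scc_ess_loop[OF mvf fin MsS[OF p] x crit] by blast
        then show "x \<in> Inv X V ?S" unfolding Inv_def using x by blast
      qed
    qed
    moreover have "isolates X V (topspace X) ?S"
      unfolding isolates_def
    proof (intro conjI allI impI)
      show "closedin X (topspace X)" by simp
      show "?S \<subseteq> topspace X" using Mstop[OF p] .
      show "Pi_Vset X V ?S \<subseteq> topspace X"
        unfolding Pi_Vset_def using Pi_sub[OF mvf] Mstop[OF p] by blast
    next
      fix \<phi> a b assume h: "vpath X V (topspace X) \<phi> a b \<and> \<phi> a \<in> ?S \<and> \<phi> b \<in> ?S"
      show "\<phi> ` {a..b} \<subseteq> ?S"
      proof
        fix z assume "z \<in> \<phi> ` {a..b}"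
        then obtain i where i: "a \<le> i" "i \<le> b" "z = \<phi> i" by auto
        have "(\<phi> a, \<phi> i) \<in> (GV X V)\<^sup>*" using vpath_reach[of X V \<phi> a b a i] h i by simp
        moreover have "(\<phi> i, \<phi> b) \<in> (GV X V)\<^sup>*" using vpath_reach[of X V \<phi> a b i b] h i by simp
        ultimately show "z \<in> ?S" using scc_inner[OF mvf MsS[OF p]] h i by blast
      qed
    qed
    ultimately show ?thesis unfolding isolated_invariant_def invariant_def by blast
  qed
  have disj: "Ms p \<inter> Ms q = {}" if "p \<in> P" "q \<in> P" "p \<noteq> q" for p q
  proof (rule ccontr)
    assume "Ms p \<inter> Ms q \<noteq> {}"
    then obtain z where "z \<in> Ms p" "z \<in> Ms q" by blast
    then have "Ms p = Ms q" using scc_disj[OF MsS[OF that(1)] MsS[OF that(2)]] by blast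
    then show False using inj that unfolding inj_on_def by blast
  qed
  have sccof: "{y \<in> topspace X. (x, y) \<in> E\<^sup>* \<and> (y, x) \<in> E\<^sup>*} \<in> scc X V" if "x \<in> topspace X" for x
    unfolding scc_def E_def using that by blast
  have limits: "(\<exists>r\<in>P. range \<phi> \<subseteq> Ms r) \<or>
        (\<exists>p\<in>P. \<exists>q\<in>P. leq p q \<and> q \<noteq> p \<and> alpha_lim X V \<phi> \<subseteq> Ms q \<and> omega_lim X V \<phi> \<subseteq> Ms p)"
    if ess: "ess_solution X V (topspace X) \<phi>" for \<phi>
  proof -
    have sol: "full_solution X V (topspace X) \<phi>" and es: "essential X V \<phi>"
      using ess unfolding ess_solution_def by blast+
    have ptop: "\<phi> s \<in> topspace X" for s using sol unfolding full_solution_def by blast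
    obtain xm where xm: "xm \<in> uim_minus \<phi>"
      using pigeon_minus[OF fin, of \<phi>] ptop unfolding uim_minus_iff by blast
    obtain xp where xp: "xp \<in> uim_plus \<phi>"
      using pigeon_plus[OF fin, of \<phi>] ptop unfolding uim_plus_iff by blast
    have xmt: "xm \<in> topspace X" using xm ptop unfolding uim_minus_iff by metis
    have xpt: "xp \<in> topspace X" using xp ptop unfolding uim_plus_iff by metis
    define Sm where "Sm = {y \<in> topspace X. (xm, y) \<in> E\<^sup>* \<and> (y, xm) \<in> E\<^sup>*}"
    define Sp where "Sp = {y \<in> topspace X. (xp, y) \<in> E\<^sup>* \<and> (y, xp) \<in> E\<^sup>*}"
    have Sm: "Sm \<in> scc X V" unfolding Sm_def using sccof[OF xmt] .
    have Sp: "Sp \<in> scc X V" unfolding Sp_def using sccof[OF xpt] .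
    have xmS: "xm \<in> Sm" unfolding Sm_def using xmt by simp
    have xpS: "xp \<in> Sp" unfolding Sp_def using xpt by simp
    have RmS: "uim_minus \<phi> \<subseteq> Sm"
    proof
      fix y assume y: "y \<in> uim_minus \<phi>"
      have "y \<in> topspace X" using y ptop unfolding uim_minus_iff by metis
      then show "y \<in> Sm" unfolding Sm_def
        using uim_minus_reach[OF sol xm y] uim_minus_reach[OF sol y xm] unfolding E_def by blast
    qed
    have RpS: "uim_plus \<phi> \<subseteq> Sp"
    proof
      fix y assume y: "y \<in> uim_plus \<phi>"
      have "y \<in> topspace X" using y ptop unfolding uim_plus_iff by metis
      then show "y \<in> Sp" unfolding Sp_def
        using uim_plus_reach[OF sol xp y] uim_plus_reach[OF sol y xp] unfolding E_def by blast
    qed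
    have finW: "finite (topspace X - W)" for W using fin by simp
    have critm: "critical X W" if W: "W \<in> V" "Sm \<subseteq> W" for W
    proof (rule ccontr)
      assume nc: "\<not> critical X W"
      obtain t0 where t0: "\<phi> t0 = xm" using xm unfolding uim_minus_iff by blast
      have "cell V (\<phi> t0) = W" using cell_eq[OF mvf W(1)] t0 xmS W(2) by blast
      then have "\<forall>n. \<exists>s\<le>n. \<phi> s \<notin> W" using es nc unfolding essential_def by metis
      then have "\<forall>n. \<exists>s\<le>n. \<phi> s \<in> topspace X - W" using ptop by blast
      then obtain z where z: "z \<in> topspace X - W" "\<forall>n. \<exists>s\<le>n. \<phi> s = z"
        using pigeon_minus[OF finW] by blast
      have "z \<in> uim_minus \<phi>" unfolding uim_minus_iff by (rule z(2))
      then show False using RmS W(2) z(1) by blast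
    qed
    have critp: "critical X W" if W: "W \<in> V" "Sp \<subseteq> W" for W
    proof (rule ccontr)
      assume nc: "\<not> critical X W"
      obtain t0 where t0: "\<phi> t0 = xp" using xp unfolding uim_plus_iff by blast
      have "cell V (\<phi> t0) = W" using cell_eq[OF mvf W(1)] t0 xpS W(2) by blast
      then have "\<forall>n. \<exists>s\<ge>n. \<phi> s \<notin> W" using es nc unfolding essential_def by metis
      then have "\<forall>n. \<exists>s\<ge>n. \<phi> s \<in> topspace X - W" using ptop by blast
      then obtain z where z: "z \<in> topspace X - W" "\<forall>n. \<exists>s\<ge>n. \<phi> s = z"
        using pigeon_plus[OF finW] by blast
      have "z \<in> uim_plus \<phi>" unfolding uim_plus_iff by (rule z(2))
      then show False using RpS W(2) z(1) by blast
    qed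
    have SmF: "Sm \<in> Fam"
    proof -
      obtain \<psi> where \<psi>: "ess_solution X V Sm \<psi>" "range \<psi> = Sm"
        using scc_ess_loop[OF mvf fin Sm xmS critm] by blast
      then have "ess_solution X V (topspace X) \<psi>"
        using full_solution_mono[OF scc_sub[OF Sm]] unfolding ess_solution_def by blast
      then show ?thesis unfolding Fam_def using Sm \<psi>(2) by blast
    qed
    have SpF: "Sp \<in> Fam"
    proof -
      obtain \<psi> where \<psi>: "ess_solution X V Sp \<psi>" "range \<psi> = Sp"
        using scc_ess_loop[OF mvf fin Sp xpS critp] by blast
      then have "ess_solution X V (topspace X) \<psi>"
        using full_solution_mono[OF scc_sub[OF Sp]] unfolding ess_solution_def by blast
      then show ?thesis unfolding Fam_def using Sp \<psi>(2) by blast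
    qed
    obtain q where q: "q \<in> P" "Ms q = Sm" using SmF img by (metis imageE)
    obtain p where p: "p \<in> P" "Ms p = Sp" using SpF img by (metis imageE)
    show ?thesis
    proof (cases "p = q")
      case True
      have "range \<phi> \<subseteq> Ms p"
      proof
        fix z assume "z \<in> range \<phi>"
        then obtain t where t: "z = \<phi> t" by blast
        obtain s where s: "s \<le> t" "\<phi> s = xm" using xm unfolding uim_minus_iff by blast
        obtain s' where s': "s' \<ge> t" "\<phi> s' = xp" using xp unfolding uim_plus_iff by blast
        have "(xm, z) \<in> (GV X V)\<^sup>*" using sol_reach[OF sol s(1)] s t by simp
        moreover have "(z, xp) \<in> (GV X V)\<^sup>*" using sol_reach[OF sol s'(1)] s' t by simp
        moreover have "xm \<in> Ms p" "xp \<in> Ms p" using xmS xpS p q True by auto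
        ultimately show "z \<in> Ms p" using scc_inner[OF mvf MsS[OF p(1)]] by blast
      qed
      then show ?thesis using p by blast
    next
      case False
      obtain s where s: "s \<le> 0" "\<phi> s = xm" using xm unfolding uim_minus_iff by blast
      obtain s' where s': "s' \<ge> 0" "\<phi> s' = xp" using xp unfolding uim_plus_iff by blast
      have "s \<le> s'" using s s' by linarith
      then have "(xm, xp) \<in> E\<^sup>*" using sol_reach[OF sol] s s' unfolding E_def by metis
      then have "leq p q" using leq_iff p q xmS xpS by blast
      moreover have "alpha_lim X V \<phi> \<subseteq> Ms q"
        unfolding alpha_lim_def q(2)
        by (rule vhull_sub[OF scc_sub[OF Sm] scc_compatible[OF mvf Sm] scc_lc[OF mvf fin Sm] RmS])
      moreover have "omega_lim X V \<phi> \<subseteq> Ms p"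
        unfolding omega_lim_def p(2)
        by (rule vhull_sub[OF scc_sub[OF Sp] scc_compatible[OF mvf Sp] scc_lc[OF mvf fin Sp] RpS])
      ultimately show ?thesis using p(1) q(1) False by blast
    qed
  qed
  have morse: "morse_decomposition X V P leq Ms"
    unfolding morse_decomposition_def rr
    using assms(5) po Mstop isol disj limits by blast
  have minimal: "\<not> (\<exists>p\<in>Q. \<exists>q\<in>Q. p \<noteq> q \<and> N p \<noteq> {} \<and> N q \<noteq> {})"
    if i: "i \<in> P" and md: "morse_decomposition (subtopology X (Ms i)) (induced_field V (Ms i)) Q leQ N"
    for i and Q :: "'q set" and leQ N
  proof -
    let ?M = "Ms i"
    let ?Y = "subtopology X ?M"
    let ?VM = "induced_field V ?M"
    have M: "?M \<in> scc X V" using MsS[OF i] .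
    have Mt: "?M \<subseteq> topspace X" using Mstop[OF i] .
    have tY: "topspace ?Y = ?M" using Mt by auto
    obtain x0 where x0: "x0 \<in> ?M" using Msne[OF i] by blast
    define R where "R = GV X V \<inter> ?M \<times> ?M"
    have finM: "finite ?M" using fin Mt by (rule rev_finite_subset)
    have conn: "\<forall>x\<in>?M. \<forall>y\<in>?M. (x, y) \<in> R\<^sup>*" unfolding R_def using scc_restrict[OF mvf M] by blast
    have RS: "R \<subseteq> ?M \<times> ?M" unfolding R_def by blast
    have refl: "\<forall>x\<in>?M. (x, x) \<in> R"
      unfolding R_def GV_def using Pi_refl[OF mvf] Mt by blast
    obtain \<psi> and L :: int where L: "L > 0" and rng: "range \<psi> = ?M"
      and step: "\<forall>t. (\<psi> t, \<psi> (t + 1)) \<in> R" and per: "\<forall>t k. \<psi> (t + k * L) = \<psi> t"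
      using loop_exists[OF finM x0 conn RS refl] by blast
    have cellM: "cell ?VM x = cell V x" if x: "x \<in> ?M" for x
    proof -
      have xt: "x \<in> topspace X" using x Mt by blast
      have cV: "cell V x \<in> V" "x \<in> cell V x" using cell_props[OF mvf xt] by blast+
      have cM: "cell V x \<subseteq> ?M" using scc_cell[OF mvf M x] .
      show ?thesis unfolding cell_def[of ?VM]
      proof (rule the_equality)
        show "cell V x \<in> ?VM \<and> x \<in> cell V x" using cV cM unfolding induced_field_def by blast
        fix W assume "W \<in> ?VM \<and> x \<in> W"
        then show "W = cell V x" using cell_eq[OF mvf] unfolding induced_field_def by blast
      qed
    qed
    have fs: "full_solution ?Y ?VM (topspace ?Y) \<psi>"
      unfolding full_solution_def
    proof
      fix t
      have pt: "\<psi> t \<in> ?M" "\<psi> (t + 1) \<in> ?M" using rng by auto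
      have "\<psi> (t + 1) \<in> Pi_V X V (\<psi> t)" using step unfolding R_def GV_def by blast
      then have "\<psi> (t + 1) \<in> cell V (\<psi> t) \<or> \<psi> (t + 1) \<in> X closure_of {\<psi> t}"
        unfolding Pi_V_def cl_def by blast
      moreover have "?Y closure_of {\<psi> t} = ?M \<inter> X closure_of {\<psi> t}"
        using closure_of_subtopology[of X ?M "{\<psi> t}"] pt(1) by simp
      ultimately have "\<psi> (t + 1) \<in> Pi_V ?Y ?VM (\<psi> t)"
        unfolding Pi_V_def cl_def cellM[OF pt(1)] using pt(2) by blast
      then show "\<psi> t \<in> topspace ?Y \<and> \<psi> (t + 1) \<in> Pi_V ?Y ?VM (\<psi> t)" using pt tY by blast
    qed
    have es: "essential ?Y ?VM \<psi>"
      unfolding essential_def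
    proof (intro allI impI)
      fix t assume nc: "\<not> critical ?Y (cell ?VM (\<psi> t))"
      have pt: "\<psi> t \<in> ?M" using rng by auto
      have ce: "cell ?VM (\<psi> t) = cell V (\<psi> t)" using cellM[OF pt] .
      have cM: "cell V (\<psi> t) \<subseteq> ?M" using scc_cell[OF mvf M pt] .
      have "\<not> ?M \<subseteq> cell V (\<psi> t)"
      proof
        assume "?M \<subseteq> cell V (\<psi> t)"
        then have "cell V (\<psi> t) = ?M" using cM by blast
        then show False using nc ce crit_self[OF Mt Msne[OF i]] by simp
      qed
      then obtain y where y: "y \<in> ?M" "y \<notin> cell V (\<psi> t)" by blast
      then obtain t0 where "\<psi> t0 = y" using rng by (metis rangeE)
      then show "(\<forall>n. \<exists>s\<le>n. \<psi> s \<notin> cell ?VM (\<psi> t)) \<and> (\<forall>n. \<exists>s\<ge>n. \<psi> s \<notin> cell ?VM (\<psi> t))"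
        using periodic_leave[OF L per, of t0 "cell V (\<psi> t)"] y unfolding ce by blast
    qed
    have ess: "ess_solution ?Y ?VM (topspace ?Y) \<psi>" using fs es unfolding ess_solution_def by blast
    note mdD = morse_D1[OF md] morse_D2[OF md] morse_D3[OF md]
    have Nsub: "N p \<subseteq> ?M" if "p \<in> Q" for p using mdD(1) that tY by blast
    have Ndisj: "N p \<inter> N q = {}" if "p \<in> Q" "q \<in> Q" "p \<noteq> q" for p q
      using mdD(2) that by blast
    have lim: "(\<exists>r\<in>Q. range \<psi> \<subseteq> N r) \<or>
        (\<exists>p\<in>Q. \<exists>q\<in>Q. leQ p q \<and> q \<noteq> p \<and> alpha_lim ?Y ?VM \<psi> \<subseteq> N q \<and> omega_lim ?Y ?VM \<psi> \<subseteq> N p)"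
      by (rule mdD(3)[rule_format, OF ess])
    have bk: "(\<forall>n. \<exists>s\<le>n. \<psi> s \<notin> UNIV - {\<psi> 0}) \<and> (\<forall>n. \<exists>s\<ge>n. \<psi> s \<notin> UNIV - {\<psi> 0})"
      by (rule periodic_leave[OF L per]) simp
    have um: "\<psi> 0 \<in> uim_minus \<psi>" using bk unfolding uim_minus_iff by blast
    have up: "\<psi> 0 \<in> uim_plus \<psi>" using bk unfolding uim_plus_iff by blast
    obtain r where r: "r \<in> Q" "?M \<subseteq> N r"
    proof -
      have "\<not> (\<exists>p\<in>Q. \<exists>q\<in>Q. leQ p q \<and> q \<noteq> p \<and> alpha_lim ?Y ?VM \<psi> \<subseteq> N q \<and> omega_lim ?Y ?VM \<psi> \<subseteq> N p)"
      proof
        assume "\<exists>p\<in>Q. \<exists>q\<in>Q. leQ p q \<and> q \<noteq> p \<and> alpha_lim ?Y ?VM \<psi> \<subseteq> N q \<and> omega_lim ?Y ?VM \<psi> \<subseteq> N p"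
        then obtain p q where pq: "p \<in> Q" "q \<in> Q" "q \<noteq> p" "alpha_lim ?Y ?VM \<psi> \<subseteq> N q" "omega_lim ?Y ?VM \<psi> \<subseteq> N p"
          by blast
        have "\<psi> 0 \<in> alpha_lim ?Y ?VM \<psi>" unfolding alpha_lim_def by (rule subsetD[OF vhull_sup um])
        then have "\<psi> 0 \<in> N q" using pq(4) by blast
        moreover have "\<psi> 0 \<in> omega_lim ?Y ?VM \<psi>" unfolding omega_lim_def by (rule subsetD[OF vhull_sup up])
        then have "\<psi> 0 \<in> N p" using pq(5) by blast
        ultimately show False using Ndisj[OF pq(1,2)] pq(3) by blast
      qed
      then have "\<exists>r\<in>Q. range \<psi> \<subseteq> N r" using lim by blast
      then obtain r0 where r0: "r0 \<in> Q" "range \<psi> \<subseteq> N r0" by blast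
      show ?thesis
      proof (rule that[of r0])
        show "r0 \<in> Q" by (rule r0(1))
        show "?M \<subseteq> N r0" using r0(2) unfolding rng .
      qed
    qed
    show ?thesis
    proof
      assume "\<exists>p\<in>Q. \<exists>q\<in>Q. p \<noteq> q \<and> N p \<noteq> {} \<and> N q \<noteq> {}"
      then obtain p q where pq: "p \<in> Q" "q \<in> Q" "p \<noteq> q" "N p \<noteq> {}" "N q \<noteq> {}" by blast
      have e: "N s = {}" if "s \<in> Q" "s \<noteq> r" for s
        using Nsub[OF that(1)] r Ndisj[OF that(1) r(1) that(2)] by blast
      show False using e[OF pq(1)] e[OF pq(2)] pq by blast
    qed
  qed
  have po': "partial_order_on P {(i, j). leq i j}" using po unfolding r_def .
  show ?thesis
  proof (intro conjI ballI allI impI)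
    show "partial_order_on P {(i, j). leq i j}" by (rule po')
    show "morse_decomposition X V P leq Ms" by (rule morse)
  next
    fix i and Q :: "'q set" and leQ N
    assume "i \<in> P" "morse_decomposition (subtopology X (Ms i)) (induced_field V (Ms i)) Q leQ N"
    then show "\<not> (\<exists>p\<in>Q. \<exists>q\<in>Q. p \<noteq> q \<and> N p \<noteq> {} \<and> N q \<noteq> {})" by (rule minimal)
  qed
qed

end
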